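(* Let $f(z)=-2\ln(1+e^{-z/2})$ and, for an integer $k\geq0$ and real $x$, $$H_k(x)=\int_0^{\infty}\mathrm{d}\ell\;\ell^{2k+1}\big(f(\ell+x)-f(\ell-x)\big).$$ Then $H_k$ is an odd polynomial of degree $2k+3$, given by $$H_k(x)=(2k+1)!\sum_{i=0}^{k+1}\theta_{i-1}\,\frac{x^{2k+3-2i}}{(2k+3-2i)!},$$ where $\theta_m=\zeta(2m+2)\,(2^{2m+3}-4)$ for $m\geq-1$ (in particular $\theta_{-1}=1$).
   Context: $\zeta$ denotes the Riemann zeta function, with $\zeta(0)=-\tfrac12$. *)

theory Defs
  imports "HOL-Analysis.Analysis"
begin

text \<open>Riemann zeta function, only needed at s = 0 (value -1/2, as fixed in the
context) and at real s > 1, where it is the Dirichlet series.\<close>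
definition zeta :: "real \<Rightarrow> real" where
  "zeta s = (if s = 0 then - 1 / 2 else (\<Sum>n. 1 / (real (Suc n)) powr s))"

definition f :: "real \<Rightarrow> real" where
  "f z = - 2 * ln (1 + exp (- z / 2))"

definition theta :: "int \<Rightarrow> real" where
  "theta m = zeta (2 * of_int m + 2) * (2 powr (2 * of_int m + 3) - 4)"

definition H :: "nat \<Rightarrow> real \<Rightarrow> real" where
  "H k x = integral {0..} (\<lambda>l. l ^ (2 * k + 1) * (f (l + x) - f (l - x)))"

end

theory Submission
  imports Defs
begin

lemma image_mult_atLeast0:
  fixes c :: real assumes "c > 0" shows "(\<lambda>u. c * u) ` {0..} = {0..}"
proof
  show "(\<lambda>u. c * u) ` {0..} \<subseteq> {0..}" using assms by auto
  show "{0..} \<subseteq> (\<lambda>u. c * u) ` {0..}"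
  proof
    fix t :: real assume "t \<in> {0..}"
    then have "t = c * (t / c)" "t / c \<in> {0..}" using assms by auto
    then show "t \<in> (\<lambda>u. c * u) ` {0..}" by blast
  qed
qed

lemma gamma_nat_has_integral:
  "((\<lambda>t::real. t ^ m * exp (- t)) has_integral fact m) {0..}"
proof -
  have "((\<lambda>t. t powr (real m + 1 - 1) / exp t) has_integral Gamma (real m + 1)) {0..}"
    by (rule Gamma_integral_real) simp
  moreover have "Gamma (real m + 1) = fact m"
    using Gamma_fact[of m] by (simp add: add.commute)
  ultimately have A: "((\<lambda>t. t powr (real m) / exp t) has_integral fact m) {0..}" by simp
  show ?thesis
  proof (rule has_integral_spike[OF _ _ A])
    show "negligible {0::real}" by simp
    fix t :: real assume "t \<in> {0..} - {0}"
    then have "t > 0" by auto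
    then show "t ^ m * exp (- t) = t powr real m / exp t"
      by (simp add: powr_realpow exp_minus divide_inverse)
  qed
qed

lemma exp_moment:
  fixes c :: real assumes c: "c > 0"
  shows "(\<lambda>u. u ^ m * exp (- (c * u))) absolutely_integrable_on {0..}"
    and "integral {0..} (\<lambda>u. u ^ m * exp (- (c * u))) = fact m / c ^ (m + 1)"
proof -
  define F where "F = (\<lambda>t::real. t ^ m * exp (- t))"
  have FI: "(F has_integral fact m) {0..}" unfolding F_def by (rule gamma_nat_has_integral)
  have FA: "F absolutely_integrable_on {0..}"
    using FI by (intro nonnegative_absolutely_integrable_1) (auto simp: F_def)
  have "(\<lambda>u. \<bar>c\<bar> * F (c * u)) absolutely_integrable_on {0..} \<and>
           integral {0..} (\<lambda>u. \<bar>c\<bar> * F (c * u)) = fact m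
     \<longleftrightarrow> F absolutely_integrable_on ((\<lambda>u. c * u) ` {0..}) \<and> integral ((\<lambda>u. c * u) ` {0..}) F = fact m"
    by (rule has_absolute_integral_change_of_variables_1') (use c in \<open>auto intro!: derivative_eq_intros simp: inj_on_def\<close>)
  moreover have "F absolutely_integrable_on ((\<lambda>u. c * u) ` {0..}) \<and> integral ((\<lambda>u. c * u) ` {0..}) F = fact m"
    using FA FI image_mult_atLeast0[OF c] by (simp add: integral_unique)
  ultimately have B: "(\<lambda>u. \<bar>c\<bar> * F (c * u)) absolutely_integrable_on {0..}"
     "integral {0..} (\<lambda>u. \<bar>c\<bar> * F (c * u)) = fact m" by auto
  have eq: "(\<lambda>u. \<bar>c\<bar> * F (c * u)) = (\<lambda>u. c ^ (m + 1) * (u ^ m * exp (- (c * u))))"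
    using c by (auto simp: F_def power_mult_distrib)
  have B1: "(\<lambda>u. c ^ (m + 1) * (u ^ m * exp (- (c * u)))) absolutely_integrable_on {0..}"
    using B(1) eq by simp
  then show A: "(\<lambda>u. u ^ m * exp (- (c * u))) absolutely_integrable_on {0..}"
    using c by (subst (asm) set_integrable_mult_right_iff) auto
  have "c ^ (m + 1) * integral {0..} (\<lambda>u. u ^ m * exp (- (c * u))) = fact m"
    using B(2) eq by simp
  then show "integral {0..} (\<lambda>u. u ^ m * exp (- (c * u))) = fact m / c ^ (m + 1)"
    using c by (simp add: field_simps)
qed


definition eta :: "nat \<Rightarrow> real" where
  "eta s = (\<Sum>i. (-1) ^ i / real (i + 1) ^ s)"

lemma exp_pow_half:
  "exp (- (real (i + 1) / 2 * u)) = exp (- u / 2) ^ Suc i"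
proof -
  have "exp (- u / 2) ^ Suc i = exp (real (Suc i) * (- u / 2))" by (simp only: exp_of_nat_mult)
  moreover have "real (Suc i) * (- u / 2) = - (real (i + 1) / 2 * u)" by (simp add: field_simps)
  ultimately show ?thesis by simp
qed

lemma f_series:
  fixes u :: real assumes u: "u > 0"
  shows "(\<lambda>i. - 2 * (-1) ^ i / real (i + 1) * exp (- (real (i + 1) / 2 * u))) sums f u"
proof -
  define y where "y = exp (- u / 2)"
  have y: "0 < y" "y < 1" using u by (auto simp: y_def)
  have ey: "exp (- (real (i + 1) / 2 * u)) = y ^ Suc i" for i
  proof -
    have "y ^ Suc i = exp (real (Suc i) * (- u / 2))" by (simp only: y_def exp_of_nat_mult)
    moreover have "real (Suc i) * (- u / 2) = - (real (i + 1) / 2 * u)" by (simp add: field_simps)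
    ultimately show ?thesis by simp
  qed
  have sm: "summable (\<lambda>n. (- 1) ^ n * (1 / real (n + 1)) * ((1 + y) - 1) ^ Suc n)"
  proof (rule summable_norm_cancel, rule summable_comparison_test[where g = "\<lambda>n. y ^ Suc n"])
    show "\<exists>N. \<forall>n\<ge>N. norm (norm ((- 1) ^ n * (1 / real (n + 1)) * ((1 + y) - 1) ^ Suc n)) \<le> y ^ Suc n"
      using y by (auto simp: abs_mult power_abs field_simps intro!: exI[of _ 0] mult_left_le)
    show "summable (\<lambda>n. y ^ Suc n)" using y by (simp add: summable_geometric)
  qed
  have "ln (1 + y) = (\<Sum>n. (- 1) ^ n * (1 / real (n + 1)) * ((1 + y) - 1) ^ Suc n)"
    by (rule ln_series) (use y in auto)
  then have "(\<lambda>n. (- 1) ^ n * (1 / real (n + 1)) * ((1 + y) - 1) ^ Suc n) sums ln (1 + y)"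
    using sm by (simp add: summable_sums)
  from sums_mult[OF this, of "-2"]
  have "(\<lambda>n. -2 * ((- 1) ^ n * (1 / real (n + 1)) * ((1 + y) - 1) ^ Suc n)) sums f u"
    by (simp add: f_def y_def)
  moreover have "(\<lambda>n. -2 * ((- 1) ^ n * (1 / real (n + 1)) * ((1 + y) - 1) ^ Suc n)) =
     (\<lambda>i. - 2 * (-1) ^ i / real (i + 1) * exp (- (real (i + 1) / 2 * u)))"
    by (rule ext) (simp only: ey, simp)
  ultimately show ?thesis by simp
qed

lemma mono_integral:
  fixes m :: nat
  shows "(\<lambda>u. u ^ m * f u) absolutely_integrable_on {0..}"
    and "integral {0..} (\<lambda>u. u ^ m * f u) = - (2 ^ (m + 2) * fact m * eta (m + 2))"
proof -
  define c :: "nat \<Rightarrow> real" where "c i = real (i + 1) / 2" for i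
  have cpos: "c i > 0" for i by (simp add: c_def)
  define h where "h = (\<lambda>i u. - 2 * (-1) ^ i / real (i + 1) * (u ^ m * exp (- (c i * u))))"
  define F where "F i u = indicator {0::real..} u *\<^sub>R h i u" for i u
  have hA: "h i absolutely_integrable_on {0..}" for i
    unfolding h_def by (rule set_integrable_mult_right) (rule exp_moment(1)[OF cpos])
  have Fint: "integrable lebesgue (F i)" for i
    using hA[of i] unfolding F_def set_integrable_def .
  have nF: "\<bar>F i u\<bar> = indicator {0::real..} u *\<^sub>R (2 / real (i + 1) * (u ^ m * exp (- (c i * u))))" for i u
    by (auto simp: F_def h_def indicator_def abs_mult power_abs)
  have nFi: "(\<integral>u. norm (F i u) \<partial>lebesgue) = 2 ^ (m + 2) * fact m / real (i + 1) ^ (m + 2)" for i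
  proof -
    have "(\<integral>u. norm (F i u) \<partial>lebesgue) = set_lebesgue_integral lebesgue {0..} (\<lambda>u. 2 / real (i + 1) * (u ^ m * exp (- (c i * u))))"
      by (simp only: real_norm_def nF set_lebesgue_integral_def)
    also have "\<dots> = integral {0..} (\<lambda>u. 2 / real (i + 1) * (u ^ m * exp (- (c i * u))))"
      by (rule set_lebesgue_integral_eq_integral(2), rule set_integrable_mult_right, rule exp_moment(1)[OF cpos])
    also have "\<dots> = 2 / real (i + 1) * (fact m / c i ^ (m + 1))"
      using exp_moment(2)[OF cpos] by simp
    also have "\<dots> = 2 ^ (m + 2) * fact m / real (i + 1) ^ (m + 2)"
      by (simp add: c_def power_divide field_simps)
    finally show ?thesis .
  qed
  have Fi: "(\<integral>u. F i u \<partial>lebesgue) = - (2 ^ (m + 2) * fact m) * ((-1) ^ i / real (i + 1) ^ (m + 2))" for i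
  proof -
    have "(\<integral>u. F i u \<partial>lebesgue) = set_lebesgue_integral lebesgue {0..} (h i)"
      by (simp add: F_def set_lebesgue_integral_def)
    also have "\<dots> = integral {0..} (h i)"
      by (rule set_lebesgue_integral_eq_integral(2), rule hA)
    also have "\<dots> = - 2 * (-1) ^ i / real (i + 1) * (fact m / c i ^ (m + 1))"
      using exp_moment(2)[OF cpos] by (simp add: h_def)
    also have "\<dots> = - (2 ^ (m + 2) * fact m) * ((-1) ^ i / real (i + 1) ^ (m + 2))"
      by (simp add: c_def power_divide field_simps)
    finally show ?thesis .
  qed
  have sumn: "summable (\<lambda>i. (\<integral>u. norm (F i u) \<partial>lebesgue))"
  proof -
    have "summable (\<lambda>n. inverse (real n ^ (m + 2)))" by (rule inverse_power_summable) simp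
    then have "summable (\<lambda>n. inverse (real (Suc n) ^ (m + 2)))" by (subst summable_Suc_iff)
    then have "summable (\<lambda>n. 2 ^ (m + 2) * fact m * inverse (real (Suc n) ^ (m + 2)))"
      by (rule summable_mult)
    moreover have "(\<lambda>i. (\<integral>u. norm (F i u) \<partial>lebesgue)) = (\<lambda>n. 2 ^ (m + 2) * fact m * inverse (real (Suc n) ^ (m + 2)))"
      by (rule ext, subst nFi, simp add: divide_inverse)
    ultimately show ?thesis by simp
  qed
  have AE0: "AE u in lebesgue. u \<noteq> 0"
    unfolding eventually_ae_filter_negligible by (intro exI[of _ "{0}"]) auto
  have sumAE: "AE u in lebesgue. summable (\<lambda>i. norm (F i u)) \<and> (\<Sum>i. F i u) = indicator {0..} u *\<^sub>R (u ^ m * f u)"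
    using AE0
  proof eventually_elim
    case (elim u)
    show ?case
    proof (cases "u > 0")
      case True
      have S: "(\<lambda>i. - 2 * (-1) ^ i / real (i + 1) * exp (- (c i * u))) sums f u"
        using f_series[OF True] by (simp add: c_def)
      have "(\<lambda>i. F i u) sums (u ^ m * f u)"
        using sums_mult[OF S, of "u ^ m"] True by (simp add: F_def h_def mult_ac)
      moreover have "summable (\<lambda>i. norm (F i u))"
      proof (rule summable_comparison_test[where g = "\<lambda>i. 2 * u ^ m * exp (- u / 2) ^ Suc i"])
        show "summable (\<lambda>i. 2 * u ^ m * exp (- u / 2) ^ Suc i)"
          using True by (intro summable_mult summable_Suc_iff[THEN iffD2] summable_geometric) auto
        have "norm (norm (F i u)) \<le> 2 * u ^ m * exp (- u / 2) ^ Suc i" for i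
        proof -
          have "norm (norm (F i u)) = 2 / real (i + 1) * (u ^ m * exp (- u / 2) ^ Suc i)"
            using True by (simp only: real_norm_def abs_abs nF c_def exp_pow_half[of i u, symmetric]) simp
          also have "\<dots> \<le> 2 * (u ^ m * exp (- u / 2) ^ Suc i)"
            using True by (intro mult_right_mono) (auto simp: field_simps)
          finally show ?thesis by simp
        qed
        then show "\<exists>N. \<forall>n\<ge>N. norm (norm (F n u)) \<le> 2 * u ^ m * exp (- u / 2) ^ Suc n" by blast
      qed
      ultimately show ?thesis using True by (simp add: sums_iff)
    next
      case False
      then have "u < 0" using elim by auto
      then show ?thesis by (simp add: F_def)
    qed
  qed
  have sumAE': "AE u in lebesgue. summable (\<lambda>i. norm (F i u))"
    using sumAE by eventually_elim auto
  have eqAE: "AE u in lebesgue. (\<Sum>i. F i u) = indicator {0..} u *\<^sub>R (u ^ m * f u)"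
    using sumAE by eventually_elim auto
  have I1: "integrable lebesgue (\<lambda>u. \<Sum>i. F i u)"
    by (rule integrable_suminf[OF Fint sumAE' sumn])
  have I2: "(\<lambda>i. integral\<^sup>L lebesgue (F i)) sums (\<integral>u. (\<Sum>i. F i u) \<partial>lebesgue)"
    by (rule sums_integral[OF Fint sumAE' sumn])
  have meas: "(\<lambda>u. indicator {0::real..} u *\<^sub>R (u ^ m * f u)) \<in> borel_measurable lebesgue"
  proof -
    have "(\<lambda>u. indicator {0::real..} u *\<^sub>R (u^m * f u)) \<in> borel_measurable lborel"
      unfolding f_def by measurable
    then show ?thesis by (rule measurable_completion)
  qed
  have I3: "integrable lebesgue (\<lambda>u. indicator {0::real..} u *\<^sub>R (u ^ m * f u))"
    using integrable_cong_AE[OF borel_measurable_integrable[OF I1] meas eqAE] I1 by simp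
  have I4: "(\<integral>u. indicator {0::real..} u *\<^sub>R (u ^ m * f u) \<partial>lebesgue) = (\<integral>u. (\<Sum>i. F i u) \<partial>lebesgue)"
    using integral_cong_AE[OF borel_measurable_integrable[OF I1] meas eqAE] by simp
  have SI: "set_integrable lebesgue {0..} (\<lambda>u. u ^ m * f u)"
    using I3 unfolding set_integrable_def .
  then show "(\<lambda>u. u ^ m * f u) absolutely_integrable_on {0..}" .
  have "(\<lambda>i. - (2 ^ (m + 2) * fact m) * ((-1) ^ i / real (i + 1) ^ (m + 2))) sums (\<integral>u. (\<Sum>i. F i u) \<partial>lebesgue)"
    using I2 by (simp only: Fi)
  then have "(\<lambda>i. (-1) ^ i / real (i + 1) ^ (m + 2)) sums ((\<integral>u. (\<Sum>i. F i u) \<partial>lebesgue) / - (2 ^ (m + 2) * fact m))"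
    by (rule sums_mult_D) simp
  then have "eta (m + 2) = (\<integral>u. (\<Sum>i. F i u) \<partial>lebesgue) / - (2 ^ (m + 2) * fact m)"
    unfolding eta_def by (rule sums_unique[symmetric])
  then have E: "(\<integral>u. (\<Sum>i. F i u) \<partial>lebesgue) = - (2 ^ (m + 2) * fact m * eta (m + 2))"
    by (simp add: field_simps)
  have "integral {0..} (\<lambda>u. u ^ m * f u) = set_lebesgue_integral lebesgue {0..} (\<lambda>u. u ^ m * f u)"
    by (rule set_lebesgue_integral_eq_integral(2)[symmetric, OF SI])
  also have "\<dots> = (\<integral>u. (\<Sum>i. F i u) \<partial>lebesgue)"
    using I4 by (simp add: set_lebesgue_integral_def)
  finally show "integral {0..} (\<lambda>u. u ^ m * f u) = - (2 ^ (m + 2) * fact m * eta (m + 2))"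
    using E by simp
qed

lemma theta_m1: "theta (-1) = 1"
  by (simp add: theta_def zeta_def)

lemma theta_eta: "theta (int r) = 2 ^ (2 * r + 3) * eta (2 * r + 2)"
proof -
  define s where "s = 2 * r + 2"
  have s2: "s \<ge> 2" by (simp add: s_def)
  define z where "z = (\<lambda>n. 1 / real (n + 1) ^ s)"
  have zs: "summable z"
  proof -
    have "summable (\<lambda>n. inverse (real n ^ s))" by (rule inverse_power_summable[OF s2])
    then have "summable (\<lambda>n. inverse (real (Suc n) ^ s))" by (subst summable_Suc_iff)
    then show ?thesis by (simp add: z_def divide_inverse)
  qed
  define Z where "Z = suminf z"
  have zeq: "zeta (real s) = Z"
  proof -
    have "real s \<noteq> 0" using s2 by simp
    then have "zeta (real s) = (\<Sum>n. 1 / (real (Suc n)) powr real s)" by (simp add: zeta_def)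
    also have "\<dots> = suminf z" by (simp add: z_def powr_realpow)
    finally show ?thesis by (simp add: Z_def)
  qed
  define w where "w = (\<lambda>n. if odd n then z n else 0)"
  have "(\<lambda>j. z j / 2 ^ s) sums (Z / 2 ^ s)"
    using sums_divide[OF summable_sums[OF zs]] by (simp add: Z_def)
  moreover have "(\<lambda>j. w (2 * j + 1)) = (\<lambda>j. z j / 2 ^ s)"
  proof (rule ext)
    fix j :: nat
    have "real (2 * j + 1 + 1) = 2 * real (j + 1)" by simp
    then show "w (2 * j + 1) = z j / 2 ^ s"
      by (simp only: w_def z_def power_mult_distrib) simp
  qed
  ultimately have "(\<lambda>j. w (2 * j + 1)) sums (Z / 2 ^ s)" by simp
  then have ws: "w sums (Z / 2 ^ s)"
  proof (subst (asm) sums_mono_reindex)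
    show "strict_mono (\<lambda>j::nat. 2 * j + 1)" by (rule strict_monoI) simp
    fix n :: nat assume "n \<notin> range (\<lambda>j. 2 * j + 1)"
    then show "w n = 0" unfolding w_def by (auto elim!: oddE)
  qed
  have "(\<lambda>n. z n - 2 * w n) sums (Z - 2 * (Z / 2 ^ s))"
    by (intro sums_diff sums_mult ws) (use zs in \<open>simp add: Z_def summable_sums\<close>)
  moreover have "(\<lambda>n. z n - 2 * w n) = (\<lambda>n. (-1) ^ n / real (n + 1) ^ s)"
    by (rule ext) (auto simp: w_def z_def)
  ultimately have "eta s = Z - 2 * (Z / 2 ^ s)"
    unfolding eta_def by (simp add: sums_iff)
  then have e: "eta s * 2 ^ s = Z * 2 ^ s - 2 * Z"
    by (simp add: field_simps)
  have "(2::real) ^ (2 * r + 3) = 2 * 2 ^ s" by (simp add: s_def power_add)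
  then have "2 ^ (2 * r + 3) * eta (2 * r + 2) = 2 * (eta s * 2 ^ s)"
    by (simp add: s_def)
  also have "\<dots> = 2 * Z * (2 ^ s - 2)" using e by (simp add: algebra_simps)
  finally have "2 ^ (2 * r + 3) * eta (2 * r + 2) = 2 * Z * (2 ^ s - 2)" .
  moreover have "theta (int r) = Z * (2 * 2 ^ s - 4)"
  proof -
    have "theta (int r) = zeta (real s) * (2 powr (real s + 1) - 4)"
      by (simp add: theta_def s_def add_ac)
    also have "2 powr (real s + 1) = 2 * 2 ^ s"
      by (simp add: powr_add powr_realpow)
    finally show ?thesis using zeq by simp
  qed
  ultimately show ?thesis by (simp add: algebra_simps)
qed

lemma f_neg: "f (- z) = f z - z"
proof -
  have "1 + exp (z / 2) = exp (z / 2) * (1 + exp (- z / 2))"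
    by (simp add: field_simps exp_minus)
  then have "ln (1 + exp (z / 2)) = z / 2 + ln (1 + exp (- z / 2))"
    by (simp add: ln_mult add_pos_pos ln_exp) (metis exp_gt_zero add_pos_pos zero_less_one less_irrefl)
  then show ?thesis by (simp add: f_def)
qed

lemma poly_f:
  fixes a :: "nat \<Rightarrow> real"
  shows "(\<lambda>u. \<Sum>j\<le>n. a j * (u ^ j * f u)) absolutely_integrable_on {0..}"
    and "((\<lambda>u. \<Sum>j\<le>n. a j * (u ^ j * f u)) has_integral
           (\<Sum>j\<le>n. a j * integral {0..} (\<lambda>u. u ^ j * f u))) {0..}"
proof -
  show "(\<lambda>u. \<Sum>j\<le>n. a j * (u ^ j * f u)) absolutely_integrable_on {0..}"
    by (intro absolutely_integrable_sum set_integrable_mult_right mono_integral(1)) auto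
  show "((\<lambda>u. \<Sum>j\<le>n. a j * (u ^ j * f u)) has_integral
           (\<Sum>j\<le>n. a j * integral {0..} (\<lambda>u. u ^ j * f u))) {0..}"
    by (intro has_integral_sum has_integral_mult_right integrable_integral
        set_lebesgue_integral_eq_integral(1) mono_integral(1)) auto
qed

lemma split_at:
  fixes g :: "real \<Rightarrow> real" and x :: real
  assumes g: "g absolutely_integrable_on {0..}" and x: "x \<ge> 0"
  shows "g absolutely_integrable_on {x..}"
    and "integral {x..} g = integral {0..} g - integral {0..x} g"
proof -
  show A: "g absolutely_integrable_on {x..}"
    by (rule set_integrable_subset[OF g]) (use x in auto)
  have B: "g absolutely_integrable_on {0..x}"
    by (rule set_integrable_subset[OF g]) auto
  have "(g has_integral (integral {0..x} g + integral {x..} g)) ({0..x} \<union> {x..})"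
    by (intro has_integral_Un integrable_integral set_lebesgue_integral_eq_integral(1) A B)
       (auto intro: negligible_subset[of "{x}"])
  moreover have "{0..x} \<union> {x..} = {0..}" using x by auto
  ultimately have "(g has_integral (integral {0..x} g + integral {x..} g)) {0..}" by simp
  then have "integral {0..} g = integral {0..x} g + integral {x..} g" by (rule integral_unique)
  then show "integral {x..} g = integral {0..} g - integral {0..x} g" by simp
qed

lemma image_shift_atLeast:
  fixes a b :: real shows "(\<lambda>l. l + a) ` {b..} = {b + a..}"
proof
  show "(\<lambda>l. l + a) ` {b..} \<subseteq> {b + a..}" by auto
  show "{b + a..} \<subseteq> (\<lambda>l. l + a) ` {b..}"
  proof
    fix t assume "t \<in> {b + a..}"
    then have "t = (t - a) + a" "t - a \<in> {b..}" by auto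
    then show "t \<in> (\<lambda>l. l + a) ` {b..}" by blast
  qed
qed

lemma shift_integral:
  fixes g :: "real \<Rightarrow> real"
  assumes g: "g absolutely_integrable_on {b + a..}"
  shows "((\<lambda>l. g (l + a)) has_integral integral {b + a..} g) {b..}"
proof -
  have "(\<lambda>l. \<bar>1\<bar> * g (l + a)) absolutely_integrable_on {b..} \<and>
           integral {b..} (\<lambda>l. \<bar>1\<bar> * g (l + a)) = integral {b + a..} g
     \<longleftrightarrow> g absolutely_integrable_on ((\<lambda>l. l + a) ` {b..}) \<and> integral ((\<lambda>l. l + a) ` {b..}) g = integral {b + a..} g"
    by (rule has_absolute_integral_change_of_variables_1') (auto intro!: derivative_eq_intros simp: inj_on_def)
  then have "(\<lambda>l. g (l + a)) absolutely_integrable_on {b..} \<and>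
           integral {b..} (\<lambda>l. g (l + a)) = integral {b + a..} g"
    using g by (simp add: image_shift_atLeast)
  then show ?thesis
    by (metis integrable_integral set_lebesgue_integral_eq_integral(1))
qed

lemma reflect_integral:
  fixes g :: "real \<Rightarrow> real" and x :: real
  assumes g: "continuous_on {0..x} g"
  shows "((\<lambda>l. g (x - l)) has_integral integral {0..x} g) {0..x}"
proof -
  have gA: "g absolutely_integrable_on {0..x}" by (rule absolutely_integrable_continuous_real[OF g])
  have im: "(\<lambda>l. x - l) ` {0..x} = {0..x}"
  proof
    show "(\<lambda>l. x - l) ` {0..x} \<subseteq> {0..x}" by auto
    show "{0..x} \<subseteq> (\<lambda>l. x - l) ` {0..x}"
    proof
      fix t assume "t \<in> {0..x}"
      then have "t = x - (x - t)" "x - t \<in> {0..x}" by auto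
      then show "t \<in> (\<lambda>l. x - l) ` {0..x}" by blast
    qed
  qed
  have "(\<lambda>l. \<bar>-1\<bar> * g (x - l)) absolutely_integrable_on {0..x} \<and>
           integral {0..x} (\<lambda>l. \<bar>-1\<bar> * g (x - l)) = integral {0..x} g
     \<longleftrightarrow> g absolutely_integrable_on ((\<lambda>l. x - l) ` {0..x}) \<and> integral ((\<lambda>l. x - l) ` {0..x}) g = integral {0..x} g"
    by (rule has_absolute_integral_change_of_variables_1') (auto intro!: derivative_eq_intros simp: inj_on_def)
  then have "(\<lambda>l. g (x - l)) absolutely_integrable_on {0..x} \<and>
           integral {0..x} (\<lambda>l. g (x - l)) = integral {0..x} g"
    using gA by (simp add: im)
  then show ?thesis
    by (metis integrable_integral set_lebesgue_integral_eq_integral(1))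
qed


lemma cont_f: "continuous_on S f"
  proof -
  have "\<And>z. 1 + exp z \<noteq> (0::real)" by (smt (verit) exp_gt_zero)
  then show ?thesis unfolding f_def by (intro continuous_intros) auto
qed

lemma main_pos:
  fixes p :: nat and x :: real
  assumes p: "odd p" and x: "x \<ge> 0"
  shows "((\<lambda>l. l ^ p * (f (l + x) - f (l - x))) has_integral
    ((\<Sum>j\<le>p. of_nat (p choose j) * ((-x) ^ (p - j) - x ^ (p - j)) * integral {0..} (\<lambda>u. u ^ j * f u))
      - (x ^ (p + 2) / real (p + 2) - x * x ^ (p + 1) / real (p + 1)))) {0..}"
proof -
  define Q where "Q = (\<lambda>u. (u - x) ^ p * f u)"
  define R where "R = (\<lambda>u. (u + x) ^ p * f u)"
  define cQ where "cQ = (\<lambda>j. of_nat (p choose j) * (-x) ^ (p - j))"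
  define cR where "cR = (\<lambda>j. of_nat (p choose j) * x ^ (p - j))"
  define M where "M = (\<lambda>j. integral {0..} (\<lambda>u. u ^ j * f u))"
  have Qeq: "Q = (\<lambda>u. \<Sum>j\<le>p. cQ j * (u ^ j * f u))"
  proof (rule ext)
    fix u
    have "(u - x) ^ p = (\<Sum>j\<le>p. of_nat (p choose j) * u ^ j * (-x) ^ (p - j))"
      using binomial_ring[of u "-x" p] by simp
    then show "Q u = (\<Sum>j\<le>p. cQ j * (u ^ j * f u))"
      by (simp add: Q_def cQ_def sum_distrib_left mult_ac)
  qed
  have Req: "R = (\<lambda>u. \<Sum>j\<le>p. cR j * (u ^ j * f u))"
  proof (rule ext)
    fix u
    have "(u + x) ^ p = (\<Sum>j\<le>p. of_nat (p choose j) * u ^ j * x ^ (p - j))"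
      using binomial_ring[of u "x" p] by simp
    then show "R u = (\<Sum>j\<le>p. cR j * (u ^ j * f u))"
      by (simp add: R_def cR_def sum_distrib_left mult_ac)
  qed
  have QA: "Q absolutely_integrable_on {0..}" unfolding Qeq by (rule poly_f(1))
  have RA: "R absolutely_integrable_on {0..}" unfolding Req by (rule poly_f(1))
  have IQ: "integral {0..} Q = (\<Sum>j\<le>p. cQ j * M j)"
    unfolding Qeq M_def by (rule integral_unique[OF poly_f(2)])
  have IR: "integral {0..} R = (\<Sum>j\<le>p. cR j * M j)"
    unfolding Req M_def by (rule integral_unique[OF poly_f(2)])
  define JQ where "JQ = integral {0..x} Q"
  define P0 where "P0 = x ^ (p + 2) / real (p + 2) - x * x ^ (p + 1) / real (p + 1)"
  have A1: "((\<lambda>l. l ^ p * f (l + x)) has_integral (integral {0..} Q - JQ)) {0..}"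
  proof -
    have "((\<lambda>l. Q (l + x)) has_integral integral {0 + x..} Q) {0..}"
      by (rule shift_integral) (use split_at(1)[OF QA x] in simp)
    then show ?thesis using split_at(2)[OF QA x] by (simp add: Q_def JQ_def)
  qed
  have B1: "((\<lambda>l. l ^ p * f (l - x)) has_integral integral {0..} R) {x..}"
  proof -
    have "((\<lambda>l. R (l + - x)) has_integral integral {x + - x..} R) {x..}"
      by (rule shift_integral) (use RA in simp)
    then show ?thesis by (simp add: R_def)
  qed
  have contQ: "continuous_on {0..x} Q"
    unfolding Q_def by (intro continuous_intros cont_f)
  have B2: "((\<lambda>l. l ^ p * f (l - x)) has_integral (- JQ + P0)) {0..x}"
  proof -
    have r: "((\<lambda>l. Q (x - l)) has_integral JQ) {0..x}"
      unfolding JQ_def by (rule reflect_integral[OF contQ])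
    have ftc: "((\<lambda>l. l ^ p * (l - x)) has_integral P0) {0..x}"
    proof -
      have "((\<lambda>l. l ^ p * (l - x)) has_integral
          ((\<lambda>l. l ^ (p + 2) / real (p + 2) - x * l ^ (p + 1) / real (p + 1)) x -
           (\<lambda>l. l ^ (p + 2) / real (p + 2) - x * l ^ (p + 1) / real (p + 1)) 0)) {0..x}"
      proof (rule fundamental_theorem_of_calculus[OF x])
        fix l :: real assume "l \<in> {0..x}"
        show "((\<lambda>l. l ^ (p + 2) / real (p + 2) - x * l ^ (p + 1) / real (p + 1)) has_vector_derivative
             l ^ p * (l - x)) (at l within {0..x})"
        proof -
          have d: "((\<lambda>l. l ^ (p + 2) / real (p + 2) - x * l ^ (p + 1) / real (p + 1)) has_real_derivative
             (real (p + 2) * l ^ (p + 1) / real (p + 2) - x * (real (p + 1) * l ^ p) / real (p + 1))) (at l within {0..x})"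
            using DERIV_diff[OF DERIV_cdivide[OF DERIV_pow[of "p + 2" l "{0..x}"]]
                 DERIV_cdivide[OF DERIV_cmult[OF DERIV_pow[of "p + 1" l "{0..x}"]]], of "real (p + 2)" x "real (p + 1)"]
            by simp
          have e: "real (p + 2) * l ^ (p + 1) / real (p + 2) - x * (real (p + 1) * l ^ p) / real (p + 1) = l ^ p * (l - x)"
          proof -
            have n1: "real (p + 2) \<noteq> 0" "real (p + 1) \<noteq> 0" by auto
            have "real (p + 2) * l ^ (p + 1) / real (p + 2) = l ^ (p + 1)"
              using n1(1) by (rule nonzero_mult_div_cancel_left)
            moreover have "x * (real (p + 1) * l ^ p) / real (p + 1) = x * l ^ p"
              using nonzero_mult_div_cancel_left[OF n1(2), of "x * l ^ p"] by (simp only: mult.left_commute)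
            ultimately show ?thesis by (simp add: algebra_simps)
          qed
          show ?thesis using d unfolding e has_real_derivative_iff_has_vector_derivative .
        qed
      qed
      then show ?thesis by (simp add: P0_def)
    qed
    have "((\<lambda>l. - Q (x - l) + l ^ p * (l - x)) has_integral (- JQ + P0)) {0..x}"
      by (intro has_integral_add has_integral_neg r ftc)
    moreover have "- Q (x - l) + l ^ p * (l - x) = l ^ p * f (l - x)" for l
    proof -
      have "(x - l - x) ^ p = - (l ^ p)" using p by (simp add: power_minus_odd)
      then have "- Q (x - l) + l ^ p * (l - x) = l ^ p * (f (x - l) + (l - x))"
        by (simp add: Q_def algebra_simps)
      also have "f (x - l) + (l - x) = f (l - x)" using f_neg[of "x - l"] by simp
      finally show ?thesis .
    qed
    ultimately show ?thesis by simp
  qed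
  have B: "((\<lambda>l. l ^ p * f (l - x)) has_integral (- JQ + P0 + integral {0..} R)) {0..}"
  proof -
    have "((\<lambda>l. l ^ p * f (l - x)) has_integral (- JQ + P0 + integral {0..} R)) ({0..x} \<union> {x..})"
      by (intro has_integral_Un B1 B2) (auto intro: negligible_subset[of "{x}"])
    moreover have "{0..x} \<union> {x..} = {0..}" using x by auto
    ultimately show ?thesis by simp
  qed
  have E1: "integral {0..} Q - integral {0..} R = (\<Sum>j\<le>p. (cQ j - cR j) * M j)"
    by (simp add: IQ IR sum_subtractf[symmetric] left_diff_distrib)
  have E2: "(\<Sum>j\<le>p. (cQ j - cR j) * M j) =
      (\<Sum>j\<le>p. of_nat (p choose j) * ((-x) ^ (p - j) - x ^ (p - j)) * integral {0..} (\<lambda>u. u ^ j * f u))"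
    by (simp add: cQ_def cR_def M_def right_diff_distrib)
  have E: "integral {0..} Q - JQ - (- JQ + P0 + integral {0..} R) =
    (\<Sum>j\<le>p. of_nat (p choose j) * ((-x) ^ (p - j) - x ^ (p - j)) * integral {0..} (\<lambda>u. u ^ j * f u))
      - (x ^ (p + 2) / real (p + 2) - x * x ^ (p + 1) / real (p + 1))"
    using E1 E2 unfolding P0_def by linarith
  have "((\<lambda>l. l ^ p * f (l + x) - l ^ p * f (l - x)) has_integral
      (integral {0..} Q - JQ - (- JQ + P0 + integral {0..} R))) {0..}"
    by (rule has_integral_diff[OF A1 B])
  then have "((\<lambda>l. l ^ p * f (l + x) - l ^ p * f (l - x)) has_integral
    ((\<Sum>j\<le>p. of_nat (p choose j) * ((-x) ^ (p - j) - x ^ (p - j)) * integral {0..} (\<lambda>u. u ^ j * f u))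
      - (x ^ (p + 2) / real (p + 2) - x * x ^ (p + 1) / real (p + 1)))) {0..}"
    unfolding E .
  then show ?thesis by (simp only: right_diff_distrib)
qed


lemma pair_sum: "(\<Sum>j\<le>2 * k + 1. g j) = (\<Sum>r\<le>k. g (2 * r) + g (2 * r + 1))"
  for g :: "nat \<Rightarrow> real"
proof (induction k)
  case 0 then show ?case by simp
next
  case (Suc k)
  have "2 * Suc k + 1 = Suc (Suc (2 * k + 1))" by simp
  then show ?case using Suc by (simp add: sum.atMost_Suc)
qed

lemma aux_frac: "(a::real) > 0 \<Longrightarrow> c > 0 \<Longrightarrow> c * (y / ((a + 1) * a * c)) = - (y / (a + 1) - y / a)"
proof -
  assume a: "a > 0" and c: "c > 0"
  have "c * (y / ((a + 1) * a * c)) = y / ((a + 1) * a)" using c by simp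
  also have "\<dots> = - (y / (a + 1) - y / a)"
    using a by (simp add: field_simps add_pos_pos)
  finally show ?thesis .
qed

lemma alg:
  fixes k :: nat and x :: real
  defines "p \<equiv> 2 * k + 1"
  shows "(\<Sum>j\<le>p. of_nat (p choose j) * ((-x) ^ (p - j) - x ^ (p - j)) * integral {0..} (\<lambda>u. u ^ j * f u))
      - (x ^ (p + 2) / real (p + 2) - x * x ^ (p + 1) / real (p + 1))
    = fact (2 * k + 1) * (\<Sum>i = 0..k + 1. theta (int i - 1) *
              x ^ (2 * k + 3 - 2 * i) / fact (2 * k + 3 - 2 * i))"
proof -
  define T where "T = (\<lambda>j. of_nat (p choose j) * ((-x) ^ (p - j) - x ^ (p - j)) * integral {0..} (\<lambda>u. u ^ j * f u))"
  have T1: "T (2 * r + 1) = 0" if "r \<le> k" for r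
  proof -
    have "p - (2 * r + 1) = 2 * (k - r)" using that by (simp add: p_def)
    then have "even (p - (2 * r + 1))" by simp
    then show ?thesis by (simp add: T_def)
  qed
  have T0: "T (2 * r) = fact p * (theta (int r) * x ^ (p - 2 * r) / fact (p - 2 * r))" if "r \<le> k" for r
  proof -
    have "p - 2 * r = 2 * (k - r) + 1" using that by (simp add: p_def)
    then have od: "odd (p - 2 * r)" by simp
    have le: "2 * r \<le> p" using that by (simp add: p_def)
    have "T (2 * r) = of_nat (p choose (2 * r)) * (- 2 * x ^ (p - 2 * r)) * (- (2 ^ (2 * r + 2) * fact (2 * r) * eta (2 * r + 2)))"
      using od by (simp add: T_def mono_integral(2) power_minus_odd)
    moreover have "(of_nat (p choose (2 * r)) :: real) = fact p / (fact (2 * r) * fact (p - 2 * r))"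
      by (rule binomial_fact[OF le])
    moreover have "theta (int r) = 2 ^ (2 * r + 3) * eta (2 * r + 2)" by (rule theta_eta)
    ultimately show ?thesis
      by (simp add: field_simps power_add)
  qed
  have LHS: "(\<Sum>j\<le>p. T j) = (\<Sum>r\<le>k. fact p * (theta (int r) * x ^ (p - 2 * r) / fact (p - 2 * r)))"
    unfolding p_def pair_sum unfolding p_def[symmetric]
    by (rule sum.cong) (auto simp: T0 T1[simplified])
  have RHS: "(\<Sum>i = 0..k + 1. theta (int i - 1) * x ^ (2 * k + 3 - 2 * i) / fact (2 * k + 3 - 2 * i))
     = x ^ (2 * k + 3) / fact (2 * k + 3) + (\<Sum>r\<le>k. theta (int r) * x ^ (p - 2 * r) / fact (p - 2 * r))"
  proof -
    have "(\<Sum>i = 0..k + 1. theta (int i - 1) * x ^ (2 * k + 3 - 2 * i) / fact (2 * k + 3 - 2 * i))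
      = theta (int 0 - 1) * x ^ (2 * k + 3 - 2 * 0) / fact (2 * k + 3 - 2 * 0) +
        (\<Sum>r = 0..k. theta (int (Suc r) - 1) * x ^ (2 * k + 3 - 2 * Suc r) / fact (2 * k + 3 - 2 * Suc r))"
      by (simp only: Suc_eq_plus1[symmetric] sum.atLeast0_atMost_Suc_shift o_def)
    also have "\<dots> = x ^ (2 * k + 3) / fact (2 * k + 3) + (\<Sum>r\<le>k. theta (int r) * x ^ (p - 2 * r) / fact (p - 2 * r))"
    proof -
      have "2 * k + 3 - 2 * Suc r = p - 2 * r" for r by (simp add: p_def)
      moreover have "int (Suc r) - 1 = int r" for r by simp
      ultimately show ?thesis by (simp add: theta_m1 atLeast0AtMost)
    qed
    finally show ?thesis .
  qed
  have F: "fact p * (x ^ (2 * k + 3) / fact (2 * k + 3)) = - (x ^ (p + 2) / real (p + 2) - x * x ^ (p + 1) / real (p + 1))"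
  proof -
    have k3: "2 * k + 3 = p + 2" by (simp add: p_def)
    have "(fact (p + 2) :: real) = real (p + 2) * real (p + 1) * fact p"
      by (simp add: fact_Suc_0 algebra_simps)
    moreover have "x * x ^ (p + 1) = x ^ (p + 2)" by simp
    moreover have "real (p + 2) = real (p + 1) + 1" by simp
    ultimately show ?thesis unfolding k3
      using aux_frac[of "real (p + 1)" "fact p" "x ^ (p + 2)"] by simp
  qed
  show ?thesis
    unfolding T_def[symmetric] LHS RHS p_def[symmetric] using F
    by (simp add: distrib_left sum_distrib_left)
qed


lemma pos_case:
  fixes k :: nat and x :: real assumes x: "x \<ge> 0"
  shows "((\<lambda>l. l ^ (2 * k + 1) * (f (l + x) - f (l - x))) has_integral
           (fact (2 * k + 1) * (\<Sum>i = 0..k + 1. theta (int i - 1) *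
              x ^ (2 * k + 3 - 2 * i) / fact (2 * k + 3 - 2 * i)))) {0..}"
  using main_pos[of "2 * k + 1" x] alg[of k x] x by simp

theorem lemma5p3:
  fixes k :: nat and x :: real
  shows "((\<lambda>l. l ^ (2 * k + 1) * (f (l + x) - f (l - x))) has_integral
           (fact (2 * k + 1) * (\<Sum>i = 0..k + 1. theta (int i - 1) *
              x ^ (2 * k + 3 - 2 * i) / fact (2 * k + 3 - 2 * i)))) {0..}
         \<and> H k x = fact (2 * k + 1) * (\<Sum>i = 0..k + 1. theta (int i - 1) *
              x ^ (2 * k + 3 - 2 * i) / fact (2 * k + 3 - 2 * i))"
proof -
  have I: "((\<lambda>l. l ^ (2 * k + 1) * (f (l + x) - f (l - x))) has_integral
           (fact (2 * k + 1) * (\<Sum>i = 0..k + 1. theta (int i - 1) *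
              x ^ (2 * k + 3 - 2 * i) / fact (2 * k + 3 - 2 * i)))) {0..}"
  proof (cases "x \<ge> 0")
    case True then show ?thesis by (rule pos_case)
  next
    case False
    define y where "y = - x"
    have y: "y \<ge> 0" using False by (simp add: y_def)
    have "((\<lambda>l. - (l ^ (2 * k + 1) * (f (l + y) - f (l - y)))) has_integral
           - (fact (2 * k + 1) * (\<Sum>i = 0..k + 1. theta (int i - 1) *
              y ^ (2 * k + 3 - 2 * i) / fact (2 * k + 3 - 2 * i)))) {0..}"
      by (rule has_integral_neg[OF pos_case[OF y]])
    moreover have "(\<lambda>l. - (l ^ (2 * k + 1) * (f (l + y) - f (l - y)))) =
        (\<lambda>l. l ^ (2 * k + 1) * (f (l + x) - f (l - x)))"
      by (rule ext) (simp add: y_def algebra_simps)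
    moreover have "- (fact (2 * k + 1) * (\<Sum>i = 0..k + 1. theta (int i - 1) *
              y ^ (2 * k + 3 - 2 * i) / fact (2 * k + 3 - 2 * i))) =
        fact (2 * k + 1) * (\<Sum>i = 0..k + 1. theta (int i - 1) *
              x ^ (2 * k + 3 - 2 * i) / fact (2 * k + 3 - 2 * i))"
    proof -
      have "(\<Sum>i = 0..k + 1. theta (int i - 1) * x ^ (2 * k + 3 - 2 * i) / fact (2 * k + 3 - 2 * i))
          = (\<Sum>i = 0..k + 1. - (theta (int i - 1) * y ^ (2 * k + 3 - 2 * i) / fact (2 * k + 3 - 2 * i)))"
      proof (rule sum.cong)
        fix i assume "i \<in> {0..k + 1}"
        then have "2 * k + 3 - 2 * i = 2 * (k + 1 - i) + 1" by auto
        then have "odd (2 * k + 3 - 2 * i)" by simp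
        then have "x ^ (2 * k + 3 - 2 * i) = - (y ^ (2 * k + 3 - 2 * i))"
          by (simp add: y_def power_minus_odd)
        then show "theta (int i - 1) * x ^ (2 * k + 3 - 2 * i) / fact (2 * k + 3 - 2 * i) =
            - (theta (int i - 1) * y ^ (2 * k + 3 - 2 * i) / fact (2 * k + 3 - 2 * i))" by simp
      qed simp
      then show ?thesis by (simp only: sum_negf mult_minus_right)
    qed
    ultimately show ?thesis by simp
  qed
  moreover have "H k x = fact (2 * k + 1) * (\<Sum>i = 0..k + 1. theta (int i - 1) *
              x ^ (2 * k + 3 - 2 * i) / fact (2 * k + 3 - 2 * i))"
    unfolding H_def by (rule integral_unique[OF I])
  ultimately show ?thesis by blast
qed

end
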